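(* Let $\alpha,\beta,C,A,K,K_h,K_s>0$ be constants with $\alpha K_h>K_s$, and set $h_*=1-\frac{K_s}{\alpha K_h}>0$. For $s\ge 0$ and $\eta>0$ define \[ \hat r(\eta)=\Bigl(\frac{\beta C}{\eta}+1+\frac{\beta}{C}\eta\Bigr)^{-1},\qquad \hat v_0(\eta)=\alpha AK\eta^2-K_h, \] \[ \hat q_0(s,\eta)=\tfrac12\sqrt{\hat v_0(\eta)^2+4AK\hat r(\eta)\eta^2 s}-\tfrac12\hat v_0(\eta), \] \[ \hat f_0(s,\eta)=-\hat r(\eta)s+K_s,\qquad \hat g_0(s,\eta)=-\hat q_0(s,\eta)+K_h, \] the slow and fast components of the singular fast–slow system $\frac{ds}{dt}=\hat f_0(s,\eta)$, $\epsilon\frac{d\eta}{dt}=\hat g_0(s,\eta)$ (with $s$ slow, $\eta$ fast). Let \[ \hat{\mathcal S}_B=\{(\psi(\eta),\eta):\eta>0\},\qquad \psi(\eta)=\frac{\alpha K_h}{\hat r(\eta)}, \] which is the part of the critical manifold $\{\hat g_0=0\}$ lying in $\eta>0$. Then $\hat{\mathcal S}_B$ possesses a single fold point, namely \[ F_B=(s_B,\eta_B)=\bigl(\alpha K_h(2\beta+1),\,C\bigr), \] and this point is a generic fold point.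
   Context: For a fast–slow system $\dot x=f(x,y)$, $\epsilon\dot y=g(x,y)$ with slow variable $x$ and fast variable $y$, a point $P$ on the critical manifold $\{g=0\}$ is a fold point if $g(P)=0$ and $\partial_y g(P)=0$; it is a generic fold point if in addition $\partial_y^2 g(P)\neq 0$ and $\partial_x g(P)\neq 0$ (nondegeneracy) and $f(P)\neq 0$ (transversality of the slow flow). Here $x=s$, $y=\eta$, $f=\hat f_0$, $g=\hat g_0$. *)

theory Defs
  imports "HOL-Analysis.Analysis"
begin

definition r_hat :: "real \<Rightarrow> real \<Rightarrow> real \<Rightarrow> real" where
  "r_hat \<beta> C \<eta> = inverse (\<beta> * C / \<eta> + 1 + \<beta> / C * \<eta>)"

definition v0_hat :: "real \<Rightarrow> real \<Rightarrow> real \<Rightarrow> real \<Rightarrow> real \<Rightarrow> real" where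
  "v0_hat \<alpha> A K Kh \<eta> = \<alpha> * A * K * \<eta>^2 - Kh"

definition q0_hat :: "real \<Rightarrow> real \<Rightarrow> real \<Rightarrow> real \<Rightarrow> real \<Rightarrow> real \<Rightarrow> real \<Rightarrow> real \<Rightarrow> real" where
  "q0_hat \<alpha> \<beta> C A K Kh s \<eta> =
     sqrt ((v0_hat \<alpha> A K Kh \<eta>)^2 + 4 * A * K * r_hat \<beta> C \<eta> * \<eta>^2 * s) / 2
     - v0_hat \<alpha> A K Kh \<eta> / 2"

definition f0_hat :: "real \<Rightarrow> real \<Rightarrow> real \<Rightarrow> real \<Rightarrow> real \<Rightarrow> real" where
  "f0_hat \<beta> C Ks s \<eta> = - r_hat \<beta> C \<eta> * s + Ks"

definition g0_hat :: "real \<Rightarrow> real \<Rightarrow> real \<Rightarrow> real \<Rightarrow> real \<Rightarrow> real \<Rightarrow> real \<Rightarrow> real \<Rightarrow> real" where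
  "g0_hat \<alpha> \<beta> C A K Kh s \<eta> = - q0_hat \<alpha> \<beta> C A K Kh s \<eta> + Kh"

definition psi_B :: "real \<Rightarrow> real \<Rightarrow> real \<Rightarrow> real \<Rightarrow> real \<Rightarrow> real" where
  "psi_B \<alpha> \<beta> C Kh \<eta> = \<alpha> * Kh / r_hat \<beta> C \<eta>"

definition S_B :: "real \<Rightarrow> real \<Rightarrow> real \<Rightarrow> real \<Rightarrow> (real \<times> real) set" where
  "S_B \<alpha> \<beta> C Kh = {(psi_B \<alpha> \<beta> C Kh \<eta>, \<eta>) | \<eta>. \<eta> > 0}"

definition fold_point :: "(real \<Rightarrow> real \<Rightarrow> real) \<Rightarrow> real \<times> real \<Rightarrow> bool" where
  "fold_point g P \<longleftrightarrow> (case P of (x, y) \<Rightarrow>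
     g x y = 0 \<and> ((\<lambda>y'. g x y') has_real_derivative 0) (at y))"

definition generic_fold_point ::
  "(real \<Rightarrow> real \<Rightarrow> real) \<Rightarrow> (real \<Rightarrow> real \<Rightarrow> real) \<Rightarrow> real \<times> real \<Rightarrow> bool" where
  "generic_fold_point f g P \<longleftrightarrow> fold_point g P \<and> (case P of (x, y) \<Rightarrow>
     (\<exists>gy d2. (\<forall>\<^sub>F y' in nhds y. ((\<lambda>z. g x z) has_real_derivative gy y') (at y'))
              \<and> (gy has_real_derivative d2) (at y) \<and> d2 \<noteq> 0)
   \<and> (\<exists>gx. ((\<lambda>z. g z y) has_real_derivative gx) (at x) \<and> gx \<noteq> 0)
   \<and> f x y \<noteq> 0)"

end

theory Submission
  imports Defs
begin

definition rho :: "real \<Rightarrow> real \<Rightarrow> real \<Rightarrow> real" where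
  "rho \<beta> C y = C * y^3 / (\<beta>*C^2 + C*y + \<beta>*y^2)"
definition rho1 :: "real \<Rightarrow> real \<Rightarrow> real \<Rightarrow> real" where
  "rho1 \<beta> C y = C * y^2 * (3*\<beta>*C^2 + 2*C*y + \<beta>*y^2) / (\<beta>*C^2 + C*y + \<beta>*y^2)^2"

lemma E_pos: "\<beta> > 0 \<Longrightarrow> C > 0 \<Longrightarrow> (y::real) > 0 \<Longrightarrow> \<beta>*C^2 + C*y + \<beta>*y^2 > 0"
  by (simp add: add_pos_pos)

lemma rho_deriv:
  assumes "\<beta> > 0" "C > 0" "(y::real) > 0"
  shows "(rho \<beta> C has_real_derivative rho1 \<beta> C y) (at y)"
proof -
  have E: "\<beta>*C^2 + C*y + \<beta>*y^2 \<noteq> 0" using E_pos[OF assms] by simp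
  show ?thesis unfolding rho_def[abs_def] rho1_def
    apply (rule derivative_eq_intros refl | simp add: E)+
    using E by (simp add: field_simps power2_eq_square power3_eq_cube)
qed

lemma rho1_deriv:
  assumes "\<beta> > 0" "C > 0"
  shows "(rho1 \<beta> C has_real_derivative 2*(1+\<beta>)/(2*\<beta>+1)^2) (at C)"
proof -
  have E: "\<beta>*C^2 + C*C + \<beta>*C^2 \<noteq> 0" using E_pos[OF assms assms(2)] by (simp add: power2_eq_square)
  have E2: "2*\<beta>+1 \<noteq> 0" using assms by simp
  show ?thesis unfolding rho1_def[abs_def]
    apply (rule derivative_eq_intros refl)+
    using E apply (simp add: power2_eq_square)
    using E E2 assms apply (simp add: power2_eq_square power3_eq_cube power4_eq_xxxx)
    apply (subst frac_eq_eq)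
    using assms apply (smt (verit) mult_pos_pos)
    using assms apply (smt (verit) mult_pos_pos)
    by algebra
qed

lemma r_rho: "\<beta> > 0 \<Longrightarrow> C > 0 \<Longrightarrow> (y::real) > 0 \<Longrightarrow> r_hat \<beta> C y * y^2 = rho \<beta> C y"
  unfolding r_hat_def rho_def using E_pos[of \<beta> C y]
  by (simp add: field_simps power2_eq_square power3_eq_cube)

lemma r_pos: "\<beta> > 0 \<Longrightarrow> C > 0 \<Longrightarrow> (y::real) > 0 \<Longrightarrow> r_hat \<beta> C y > 0"
  unfolding r_hat_def by (simp add: add_pos_pos)

lemma rho_pos: "\<beta> > 0 \<Longrightarrow> C > 0 \<Longrightarrow> (y::real) > 0 \<Longrightarrow> rho \<beta> C y > 0"
  unfolding rho_def using E_pos[of \<beta> C y] by simp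

lemma rho_deriv_within:
  "\<beta> > 0 \<Longrightarrow> C > 0 \<Longrightarrow> (y::real) > 0 \<Longrightarrow> D = rho1 \<beta> C y \<Longrightarrow> (rho \<beta> C has_real_derivative D) (at y within S)"
  using rho_deriv has_field_derivative_at_within by blast

lemma rho_C: "\<beta> > 0 \<Longrightarrow> C > 0 \<Longrightarrow> rho \<beta> C C = C^2/(2*\<beta>+1)"
proof -
  assume a: "\<beta> > 0" "C > 0"
  have e: "\<beta>*C^2+C*C+\<beta>*C^2 = C^2*(2*\<beta>+1)" by (simp add: algebra_simps power2_eq_square)
  have n: "2*\<beta>+1 \<noteq> 0" using a by simp
  have d: "C^2*(2*\<beta>+1) \<noteq> 0" using a by simp
  show ?thesis unfolding rho_def e by (subst frac_eq_eq[OF d n]) (simp add: power2_eq_square power3_eq_cube)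
qed

lemma rho1_C: "\<beta> > 0 \<Longrightarrow> C > 0 \<Longrightarrow> rho1 \<beta> C C = 2*C/(2*\<beta>+1)"
proof -
  assume a: "\<beta> > 0" "C > 0"
  have e: "\<beta>*C^2+C*C+\<beta>*C^2 = C^2*(2*\<beta>+1)" by (simp add: algebra_simps power2_eq_square)
  have e2: "3*\<beta>*C^2+2*C*C+\<beta>*C^2 = 2*C^2*(2*\<beta>+1)" by (simp add: algebra_simps power2_eq_square)
  have n: "2*\<beta>+1 \<noteq> 0" using a by simp
  have d: "(C^2*(2*\<beta>+1))^2 \<noteq> 0" using a by simp
  show ?thesis unfolding rho1_def e e2 by (subst frac_eq_eq[OF d n]) algebra
qed

definition Wf :: "real \<Rightarrow> real \<Rightarrow> real \<Rightarrow> real \<Rightarrow> real \<Rightarrow> real \<Rightarrow> real \<Rightarrow> real \<Rightarrow> real" where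
  "Wf \<alpha> \<beta> C A K Kh s y = (v0_hat \<alpha> A K Kh y)^2 + 4*A*K * s * rho \<beta> C y"

definition gyf :: "real \<Rightarrow> real \<Rightarrow> real \<Rightarrow> real \<Rightarrow> real \<Rightarrow> real \<Rightarrow> real \<Rightarrow> real \<Rightarrow> real" where
  "gyf \<alpha> \<beta> C A K Kh s y = - ((2 * v0_hat \<alpha> A K Kh y*(2*\<alpha>*A*K*y) + 4*A*K * s * rho1 \<beta> C y)
      / (2 * sqrt (Wf \<alpha> \<beta> C A K Kh s y)) - 2*\<alpha>*A*K*y)/2"

context
  fixes \<alpha> \<beta> C A K Kh :: real
  assumes pos: "\<alpha> > 0" "\<beta> > 0" "C > 0" "A > 0" "K > 0" "Kh > 0"
begin

lemma g_eq: "y > 0 \<Longrightarrow> g0_hat \<alpha> \<beta> C A K Kh s y = Kh - (sqrt (Wf \<alpha> \<beta> C A K Kh s y)/2 - v0_hat \<alpha> A K Kh y/2)"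
proof -
  assume y: "y > 0"
  have "4*A*K*r_hat \<beta> C y*y^2 * s = 4*A*K * s * rho \<beta> C y"
    using r_rho[OF pos(2,3) y] by (simp add: mult_ac)
  then show ?thesis unfolding g0_hat_def q0_hat_def Wf_def by simp
qed

lemma W_pos: "s > 0 \<Longrightarrow> y > 0 \<Longrightarrow> Wf \<alpha> \<beta> C A K Kh s y > 0"
  unfolding Wf_def using rho_pos[OF pos(2,3)] pos
  by (intro add_nonneg_pos) auto

lemma W_deriv:
  "y > 0 \<Longrightarrow> ((\<lambda>z. Wf \<alpha> \<beta> C A K Kh s z) has_real_derivative
      2 * v0_hat \<alpha> A K Kh y*(2*\<alpha>*A*K*y) + 4*A*K * s * rho1 \<beta> C y) (at y within S)"
  unfolding Wf_def v0_hat_def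
  apply (rule rho_deriv_within derivative_eq_intros refl)+
  apply (use pos in simp_all)
  apply (simp add: algebra_simps)
  done

lemma W_deriv_eq:
  "y > 0 \<Longrightarrow> D = 2 * v0_hat \<alpha> A K Kh y*(2*\<alpha>*A*K*y) + 4*A*K * s * rho1 \<beta> C y \<Longrightarrow> ((\<lambda>z. Wf \<alpha> \<beta> C A K Kh s z) has_real_derivative D) (at y within S)"
  using W_deriv by blast

lemma v0_deriv: "((\<lambda>z. v0_hat \<alpha> A K Kh z) has_real_derivative 2*\<alpha>*A*K*y) (at y within S)"
  unfolding v0_hat_def
  by (rule derivative_eq_intros refl | simp)+

lemma gy_deriv:
  assumes s: "s > 0" and y: "y > 0"
  shows "((\<lambda>z. g0_hat \<alpha> \<beta> C A K Kh s z) has_real_derivative gyf \<alpha> \<beta> C A K Kh s y) (at y)"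
proof -
  have Wp: "Wf \<alpha> \<beta> C A K Kh s y > 0" using W_pos s y by blast
  have d2: "((\<lambda>z. sqrt (Wf \<alpha> \<beta> C A K Kh s z)) has_real_derivative
     inverse (sqrt (Wf \<alpha> \<beta> C A K Kh s y)) / 2 * (2 * v0_hat \<alpha> A K Kh y*(2*\<alpha>*A*K*y) + 4*A*K * s * rho1 \<beta> C y)) (at y)"
    by (rule DERIV_chain2[OF DERIV_real_sqrt[OF Wp] W_deriv[OF y]])
  have "((\<lambda>z. Kh - (sqrt (Wf \<alpha> \<beta> C A K Kh s z)/2 - v0_hat \<alpha> A K Kh z/2)) has_real_derivative
     0 - ((inverse (sqrt (Wf \<alpha> \<beta> C A K Kh s y)) / 2 * (2 * v0_hat \<alpha> A K Kh y*(2*\<alpha>*A*K*y) + 4*A*K * s * rho1 \<beta> C y))/2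
         - (2*\<alpha>*A*K*y)/2)) (at y)"
    by (intro DERIV_diff DERIV_const DERIV_cdivide d2 v0_deriv)
  then have "((\<lambda>z. Kh - (sqrt (Wf \<alpha> \<beta> C A K Kh s z)/2 - v0_hat \<alpha> A K Kh z/2)) has_real_derivative gyf \<alpha> \<beta> C A K Kh s y) (at y)"
    by (rule DERIV_cong) (use Wp in \<open>simp add: gyf_def field_simps\<close>)
  then show ?thesis
    by (rule has_field_derivative_transform_within_open[where S="{0<..}"]) (auto simp: y g_eq)
qed

lemma Dn_pos: "y > 0 \<Longrightarrow> \<beta>*C/y + 1 + \<beta>/C*y > 0"
  using pos by (simp add: add_pos_pos)

lemma psi_eq: "y > 0 \<Longrightarrow> psi_B \<alpha> \<beta> C Kh y = \<alpha>*Kh*(\<beta>*C/y + 1 + \<beta>/C*y)"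
  unfolding psi_B_def r_hat_def by (simp add: divide_inverse)

lemma psi_pos: "y > 0 \<Longrightarrow> psi_B \<alpha> \<beta> C Kh y > 0"
  using psi_eq Dn_pos pos by simp

lemma psi_rho: "y > 0 \<Longrightarrow> psi_B \<alpha> \<beta> C Kh y * rho \<beta> C y = \<alpha>*Kh*y^2"
proof -
  assume y: "y > 0"
  have "r_hat \<beta> C y > 0" using r_pos pos y by blast
  then show ?thesis unfolding psi_B_def r_rho[OF pos(2,3) y, symmetric] by simp
qed

lemma W_psi: "y > 0 \<Longrightarrow> Wf \<alpha> \<beta> C A K Kh (psi_B \<alpha> \<beta> C Kh y) y = (\<alpha>*A*K*y^2+Kh)^2"
proof -
  assume y: "y > 0"
  have "4*A*K * psi_B \<alpha> \<beta> C Kh y * rho \<beta> C y = 4*A*K*(\<alpha>*Kh*y^2)"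
    using psi_rho[OF y] by (simp add: mult.assoc)
  then show ?thesis unfolding Wf_def v0_hat_def by (simp add: power2_eq_square algebra_simps)
qed

lemma sqrtW_psi: "y > 0 \<Longrightarrow> sqrt (Wf \<alpha> \<beta> C A K Kh (psi_B \<alpha> \<beta> C Kh y) y) = \<alpha>*A*K*y^2+Kh"
  using W_psi pos by simp

lemma g_psi: "y > 0 \<Longrightarrow> g0_hat \<alpha> \<beta> C A K Kh (psi_B \<alpha> \<beta> C Kh y) y = 0"
  by (simp add: g_eq sqrtW_psi v0_hat_def field_simps)

lemma rho1_D: "y > 0 \<Longrightarrow> rho1 \<beta> C y * (\<beta>*C/y + 1 + \<beta>/C*y)
   = y*(3*\<beta>*C^2 + 2*C*y + \<beta>*y^2)/(\<beta>*C^2 + C*y + \<beta>*y^2)"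
proof -
  assume y: "y > 0"
  define e where "e = \<beta>*C^2 + C*y + \<beta>*y^2"
  define F where "F = 3*\<beta>*C^2 + 2*C*y + \<beta>*y^2"
  have E: "e > 0" using E_pos pos y unfolding e_def by blast
  have D: "\<beta>*C/y + 1 + \<beta>/C*y = e/(C*y)" unfolding e_def using y pos
    by (simp add: field_simps power2_eq_square)
  have "rho1 \<beta> C y * (\<beta>*C/y + 1 + \<beta>/C*y) = C*y^2*F/e^2 * (e/(C*y))"
    unfolding D rho1_def e_def F_def ..
  also have "\<dots> = y*F/e" using E y pos by (simp add: field_simps power2_eq_square)
  finally show ?thesis unfolding e_def F_def .
qed

lemma gyf_psi: "y > 0 \<Longrightarrow> gyf \<alpha> \<beta> C A K Kh (psi_B \<alpha> \<beta> C Kh y) y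
   = -(\<alpha>*A*K*Kh*y*\<beta>*(C^2-y^2))/((\<beta>*C^2 + C*y + \<beta>*y^2)*(\<alpha>*A*K*y^2+Kh))"
proof -
  assume y: "y > 0"
  define e where "e = \<beta>*C^2 + C*y + \<beta>*y^2"
  define F where "F = 3*\<beta>*C^2 + 2*C*y + \<beta>*y^2"
  define S where "S = \<alpha>*A*K*y^2+Kh"
  have E: "e \<noteq> 0" using E_pos[OF pos(2,3) y] unfolding e_def by simp
  have "S > 0" unfolding S_def by (intro add_nonneg_pos) (use pos in auto)
  then have S: "S \<noteq> 0" by simp
  have h: "4*A*K * psi_B \<alpha> \<beta> C Kh y * rho1 \<beta> C y = 4*\<alpha>*A*K*Kh*(y*F/e)"
    unfolding psi_eq[OF y] e_def F_def rho1_D[OF y, symmetric] by (simp only: mult_ac)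
  have "gyf \<alpha> \<beta> C A K Kh (psi_B \<alpha> \<beta> C Kh y) y
     = -((2 * v0_hat \<alpha> A K Kh y*(2*\<alpha>*A*K*y) + 4*\<alpha>*A*K*Kh*(y*F/e))/(2*S) - 2*\<alpha>*A*K*y)/2"
    unfolding gyf_def sqrtW_psi[OF y] h S_def ..
  also have "\<dots> = -(\<alpha>*A*K*Kh*y*\<beta>*(C^2-y^2))/(e*S)"
    using E S apply (simp add: divide_simps)
    unfolding S_def F_def e_def v0_hat_def by (simp add: algebra_simps power2_eq_square)
  finally show ?thesis unfolding e_def S_def .
qed

lemma fold_iff: "y > 0 \<Longrightarrow> fold_point (g0_hat \<alpha> \<beta> C A K Kh) (psi_B \<alpha> \<beta> C Kh y, y) \<longleftrightarrow> y = C"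
proof -
  assume y: "y > 0"
  have E: "\<beta>*C^2 + C*y + \<beta>*y^2 > 0" using E_pos pos y by blast
  have S: "\<alpha>*A*K*y^2+Kh > 0" by (intro add_nonneg_pos) (use pos in auto)
  have D: "((\<lambda>z. g0_hat \<alpha> \<beta> C A K Kh (psi_B \<alpha> \<beta> C Kh y) z) has_real_derivative
       gyf \<alpha> \<beta> C A K Kh (psi_B \<alpha> \<beta> C Kh y) y) (at y)"
    using gy_deriv psi_pos y by blast
  have "gyf \<alpha> \<beta> C A K Kh (psi_B \<alpha> \<beta> C Kh y) y = 0 \<longleftrightarrow> y = C"
  proof
    assume "gyf \<alpha> \<beta> C A K Kh (psi_B \<alpha> \<beta> C Kh y) y = 0"
    then have "\<alpha>*A*K*Kh*y*\<beta>*(C^2-y^2) = 0" unfolding gyf_psi[OF y] using E S by simp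
    then have "C^2 = y^2" using pos y by simp
    then show "y = C" using pos y by (simp add: power2_eq_iff)
  next
    assume "y = C"
    then show "gyf \<alpha> \<beta> C A K Kh (psi_B \<alpha> \<beta> C Kh y) y = 0" unfolding gyf_psi[OF y] by simp
  qed
  then show ?thesis unfolding fold_point_def using g_psi[OF y] D DERIV_unique by auto
qed

lemma psi_C: "psi_B \<alpha> \<beta> C Kh C = \<alpha>*Kh*(2*\<beta>+1)"
  using psi_eq[of C] pos by simp

lemma rho1_deriv_eq: "D = 2*(1+\<beta>)/(2*\<beta>+1)^2 \<Longrightarrow> (rho1 \<beta> C has_real_derivative D) (at C)"
  using rho1_deriv pos by simp

lemma v0_deriv_eq: "D = 2*\<alpha>*A*K*y \<Longrightarrow> ((\<lambda>z. v0_hat \<alpha> A K Kh z) has_real_derivative D) (at y within S)"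
  using v0_deriv by simp

lemma sqrtW_deriv_eq:
  assumes "s > 0" "y > 0"
    "D = inverse (sqrt (Wf \<alpha> \<beta> C A K Kh s y)) / 2 * (2 * v0_hat \<alpha> A K Kh y*(2*\<alpha>*A*K*y) + 4*A*K * s * rho1 \<beta> C y)"
  shows "((\<lambda>z. sqrt (Wf \<alpha> \<beta> C A K Kh s z)) has_real_derivative D) (at y)"
  unfolding assms(3)
  by (rule DERIV_chain2[OF DERIV_real_sqrt[OF W_pos[OF assms(1,2)]] W_deriv[OF assms(2)]])

lemma gy2:
  "((\<lambda>z. gyf \<alpha> \<beta> C A K Kh (\<alpha>*Kh*(2*\<beta>+1)) z) has_real_derivative
      2*\<alpha>*A*K*Kh*\<beta>/((2*\<beta>+1)*(\<alpha>*A*K*C^2+Kh))) (at C)"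
proof -
  have sB: "\<alpha>*Kh*(2*\<beta>+1) > 0" using pos by simp
  have sq: "sqrt (Wf \<alpha> \<beta> C A K Kh (\<alpha>*Kh*(2*\<beta>+1)) C) = \<alpha>*A*K*C^2+Kh"
    using sqrtW_psi[of C] pos psi_C by simp
  have S: "\<alpha>*A*K*C^2+Kh > 0" by (intro add_nonneg_pos) (use pos in auto)
  have dN: "((\<lambda>z. 2 * v0_hat \<alpha> A K Kh z*(2*\<alpha>*A*K*z) + 4*A*K * (\<alpha>*Kh*(2*\<beta>+1)) * rho1 \<beta> C z)
     has_real_derivative (2 * (2*\<alpha>*A*K*C) * (2*\<alpha>*A*K*C) + 2 * v0_hat \<alpha> A K Kh C*(2*\<alpha>*A*K)
        + 4*A*K * (\<alpha>*Kh*(2*\<beta>+1)) * (2*(1+\<beta>)/(2*\<beta>+1)^2))) (at C)"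
    by (rule DERIV_cong[OF DERIV_add[OF DERIV_mult[OF DERIV_cmult[OF v0_deriv] DERIV_cmult[OF DERIV_ident]]
         DERIV_cmult[OF rho1_deriv[OF pos(2,3)]]]]) (simp add: algebra_simps)
  have dS: "((\<lambda>z. 2 * sqrt (Wf \<alpha> \<beta> C A K Kh (\<alpha>*Kh*(2*\<beta>+1)) z)) has_real_derivative
     2 * (inverse (sqrt (Wf \<alpha> \<beta> C A K Kh (\<alpha>*Kh*(2*\<beta>+1)) C)) / 2 * (2 * v0_hat \<alpha> A K Kh C*(2*\<alpha>*A*K*C) + 4*A*K * (\<alpha>*Kh*(2*\<beta>+1)) * rho1 \<beta> C C))) (at C)"
    by (rule DERIV_cmult[OF sqrtW_deriv_eq[OF sB pos(3) refl]])
  have nz: "2 * sqrt (Wf \<alpha> \<beta> C A K Kh (\<alpha>*Kh*(2*\<beta>+1)) C) \<noteq> 0" using sq S by simp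
  have dl: "((\<lambda>z. 2*\<alpha>*A*K*z) has_real_derivative 2*\<alpha>*A*K*1) (at C)"
    by (rule DERIV_cmult[OF DERIV_ident])
  show ?thesis
    unfolding gyf_def
    apply (rule DERIV_cong[OF DERIV_cdivide[OF DERIV_minus[OF DERIV_diff[OF DERIV_divide[OF dN dS nz] dl]]]])
    unfolding sq rho1_C[OF pos(2,3)] v0_hat_def using S pos
    apply (simp add: divide_simps)
    by (simp add: algebra_simps power2_eq_square)
qed

lemma gx:
  "((\<lambda>z. g0_hat \<alpha> \<beta> C A K Kh z C) has_real_derivative
     0 - (inverse (sqrt (Wf \<alpha> \<beta> C A K Kh (\<alpha>*Kh*(2*\<beta>+1)) C)) / 2 * (4*A*K*rho \<beta> C C) / 2 - 0))
     (at (\<alpha>*Kh*(2*\<beta>+1)))"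
proof -
  have sB: "\<alpha>*Kh*(2*\<beta>+1) > 0" using pos by simp
  have Wp: "Wf \<alpha> \<beta> C A K Kh (\<alpha>*Kh*(2*\<beta>+1)) C > 0" using W_pos sB pos by blast
  have dW: "((\<lambda>z. Wf \<alpha> \<beta> C A K Kh z C) has_real_derivative 4*A*K*rho \<beta> C C) (at (\<alpha>*Kh*(2*\<beta>+1)))"
    unfolding Wf_def by (rule derivative_eq_intros refl | simp)+
  have "((\<lambda>z. Kh - (sqrt (Wf \<alpha> \<beta> C A K Kh z C)/2 - v0_hat \<alpha> A K Kh C/2)) has_real_derivative
     0 - (inverse (sqrt (Wf \<alpha> \<beta> C A K Kh (\<alpha>*Kh*(2*\<beta>+1)) C)) / 2 * (4*A*K*rho \<beta> C C) / 2 - 0))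
     (at (\<alpha>*Kh*(2*\<beta>+1)))"
    by (rule DERIV_diff[OF DERIV_const DERIV_diff[OF DERIV_cdivide[OF DERIV_chain2[OF DERIV_real_sqrt[OF Wp] dW]] DERIV_const]])
  then show ?thesis
    by (rule has_field_derivative_transform_within_open[where S=UNIV]) (auto simp: g_eq pos)
qed

lemma gx_nz: "0 - (inverse (sqrt (Wf \<alpha> \<beta> C A K Kh (\<alpha>*Kh*(2*\<beta>+1)) C)) / 2 * (4*A*K*rho \<beta> C C) / 2 - 0) \<noteq> 0"
proof -
  have sB: "\<alpha>*Kh*(2*\<beta>+1) > 0" using pos by simp
  have Wp: "Wf \<alpha> \<beta> C A K Kh (\<alpha>*Kh*(2*\<beta>+1)) C > 0" using W_pos sB pos by blast
  have "rho \<beta> C C > 0" using rho_pos pos by blast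
  then show ?thesis using Wp pos by simp
qed

end

theorem proposition4:
  fixes \<alpha> \<beta> C A K Kh Ks :: real
  assumes "\<alpha> > 0" "\<beta> > 0" "C > 0" "A > 0" "K > 0" "Kh > 0" "Ks > 0"
    and "\<alpha> * Kh > Ks"
  shows "{P \<in> S_B \<alpha> \<beta> C Kh. fold_point (g0_hat \<alpha> \<beta> C A K Kh) P}
           = {(\<alpha> * Kh * (2 * \<beta> + 1), C)}
       \<and> generic_fold_point (f0_hat \<beta> C Ks) (g0_hat \<alpha> \<beta> C A K Kh)
           (\<alpha> * Kh * (2 * \<beta> + 1), C)"
proof -
  note fi = fold_iff[OF assms(1-6)]
  note pC = psi_C[OF assms(1-6)]
  have sB: "\<alpha>*Kh*(2*\<beta>+1) > 0" using assms by simp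
  have fold: "fold_point (g0_hat \<alpha> \<beta> C A K Kh) (\<alpha> * Kh * (2 * \<beta> + 1), C)"
    using fi[of C] pC assms by simp
  have set: "{P \<in> S_B \<alpha> \<beta> C Kh. fold_point (g0_hat \<alpha> \<beta> C A K Kh) P}
           = {(\<alpha> * Kh * (2 * \<beta> + 1), C)}"
  proof
    show "{P \<in> S_B \<alpha> \<beta> C Kh. fold_point (g0_hat \<alpha> \<beta> C A K Kh) P} \<subseteq> {(\<alpha> * Kh * (2 * \<beta> + 1), C)}"
    proof
      fix P assume "P \<in> {P \<in> S_B \<alpha> \<beta> C Kh. fold_point (g0_hat \<alpha> \<beta> C A K Kh) P}"
      then obtain y where y: "y > 0" "P = (psi_B \<alpha> \<beta> C Kh y, y)"
        and f: "fold_point (g0_hat \<alpha> \<beta> C A K Kh) P" unfolding S_B_def by auto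
      have "y = C" using fi[OF y(1)] f y(2) by simp
      then show "P \<in> {(\<alpha> * Kh * (2 * \<beta> + 1), C)}" using y(2) pC by simp
    qed
  next
    have "(\<alpha> * Kh * (2 * \<beta> + 1), C) \<in> S_B \<alpha> \<beta> C Kh"
      unfolding S_B_def using pC assms(3) by force
    then show "{(\<alpha> * Kh * (2 * \<beta> + 1), C)} \<subseteq> {P \<in> S_B \<alpha> \<beta> C Kh. fold_point (g0_hat \<alpha> \<beta> C A K Kh) P}"
      using fold by simp
  qed
  have ev: "\<forall>\<^sub>F y' in nhds C. ((\<lambda>z. g0_hat \<alpha> \<beta> C A K Kh (\<alpha> * Kh * (2 * \<beta> + 1)) z) has_real_derivative
      gyf \<alpha> \<beta> C A K Kh (\<alpha> * Kh * (2 * \<beta> + 1)) y') (at y')"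
  proof -
    have "\<forall>\<^sub>F y' in nhds C. y' \<in> {0<..}" using assms(3) by (intro eventually_nhds_in_open) auto
    then show ?thesis
      by eventually_elim (use gy_deriv[OF assms(1-6) sB] in auto)
  qed
  have d2nz: "2*\<alpha>*A*K*Kh*\<beta>/((2*\<beta>+1)*(\<alpha>*A*K*C^2+Kh)) \<noteq> 0"
  proof -
    have "\<alpha>*A*K*C^2+Kh > 0" by (intro add_nonneg_pos) (use assms in auto)
    then show ?thesis using assms by simp
  qed
  have rC: "r_hat \<beta> C C = inverse (2*\<beta>+1)" unfolding r_hat_def using assms by simp
  have fnz: "f0_hat \<beta> C Ks (\<alpha> * Kh * (2 * \<beta> + 1)) C \<noteq> 0"
  proof -
    have m: "Ks*(2*\<beta>+1) < \<alpha>*Kh*(2*\<beta>+1)" using assms by (intro mult_strict_right_mono) auto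
    show ?thesis unfolding f0_hat_def rC using assms m by (simp add: field_simps)
  qed
  have G1: "\<exists>gy d2. (\<forall>\<^sub>F y' in nhds C. ((\<lambda>z. g0_hat \<alpha> \<beta> C A K Kh (\<alpha> * Kh * (2 * \<beta> + 1)) z) has_real_derivative gy y') (at y'))
              \<and> (gy has_real_derivative d2) (at C) \<and> d2 \<noteq> 0"
    by (intro exI[of _ "gyf \<alpha> \<beta> C A K Kh (\<alpha> * Kh * (2 * \<beta> + 1))"]
      exI[of _ "2*\<alpha>*A*K*Kh*\<beta>/((2*\<beta>+1)*(\<alpha>*A*K*C^2+Kh))"] conjI ev gy2[OF assms(1-6)] d2nz)
  have G2: "\<exists>gx. ((\<lambda>z. g0_hat \<alpha> \<beta> C A K Kh z C) has_real_derivative gx) (at (\<alpha> * Kh * (2 * \<beta> + 1))) \<and> gx \<noteq> 0"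
    using gx[OF assms(1-6)] gx_nz[OF assms(1-6)] by blast
  show ?thesis
    unfolding generic_fold_point_def
    using set fold G1 G2 fnz by simp
qed

end
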